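(* Let $\mathcal A$ be a $\mathbb Z_2$-graded algebra with a graded differential calculus $(\Omega^\bullet,d)$, $\Omega^0=\mathcal A$, $d^2=0$, satisfying the graded Leibniz rule. Let $\pi:\Omega^1\otimes_{\mathcal A}\Omega^1\to\Omega^2$, $\pi(\xi\otimes\eta)=\xi\wedge\eta$, and $\pi_{12}=\pi\otimes1$. Let $\sigma:\Omega^1\otimes_{\mathcal A}\Omega^1\to\Omega^1\otimes_{\mathcal A}\Omega^1$ be a left $\mathcal A$-linear map with $\pi\circ(\sigma-1)=0$, and let $\sigma_{12}=\sigma\otimes1\otimes\cdots\otimes1$. Let $D$ be a covariant derivative, i.e. linear maps $D:\otimes^n\Omega^1\to\otimes^{n+1}\Omega^1$ (tensor products over $\mathcal A$), satisfying for homogeneous $f\in\mathcal A$, $\xi\in\Omega^1$, $\omega\in\Omega^1$, $\omega'\in\otimes^{n-1}\Omega^1$ and $\Omega\in\otimes^n\Omega^1$: $$D(f\Omega)=df\otimes\Omega+(-1)^{\hat f}fD\Omega,\quad D(\xi f)=(-1)^{\hat\xi}\sigma(\xi\otimes df)+(D\xi)f,\quad D(\omega\otimes\omega')=D\omega\otimes\omega'+(-1)^{\hat\omega}\sigma_{12}(\omega\otimes D\omega').$$ Suppose $D$ is torsionless, i.e. $\Theta:=d-\pi\circ D$ vanishes on $\Omega^1$. Then the curvature $\pi_{12}D^2:\Omega^1\to\Omega^2\otimes_{\mathcal A}\Omega^1$ is left $\mathcal A$-linear: $\pi_{12}D^2(f\xi)=f\,\pi_{12}D^2(\xi)$ for all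 $f\in\mathcal A$, $\xi\in\Omega^1$.
   Context: $\hat f$ denotes the parity of a homogeneous element; the parity of $d f$ is $\hat f+1$ mod 2, and $D$ changes parity by one. *)

theory Defs
  imports Main
begin

text \<open>Parities are booleans: False = even, True = odd.
  psign p x is (-1)^p x.\<close>

definition psign :: "bool \<Rightarrow> 'm::ab_group_add \<Rightarrow> 'm" where
  "psign p x = (if p then - x else x)"

definition addhom :: "('m::ab_group_add \<Rightarrow> 'n::ab_group_add) \<Rightarrow> bool" where
  "addhom f \<longleftrightarrow> (\<forall>x y. f (x + y) = f x + f y)"

definition add_subgroup :: "'m::ab_group_add set \<Rightarrow> bool" where
  "add_subgroup S \<longleftrightarrow> 0 \<in> S \<and> (\<forall>x\<in>S. \<forall>y\<in>S. x + y \<in> S) \<and> (\<forall>x\<in>S. - x \<in> S)"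

definition Z2_decomp :: "(bool \<Rightarrow> 'm::ab_group_add set) \<Rightarrow> bool" where
  "Z2_decomp G \<longleftrightarrow> (\<forall>p. add_subgroup (G p)) \<and> G False \<inter> G True = {0} \<and>
     (\<forall>x. \<exists>x0\<in>G False. \<exists>x1\<in>G True. x = x0 + x1)"

definition Z2_graded_algebra :: "(bool \<Rightarrow> 'a::ring_1 set) \<Rightarrow> bool" where
  "Z2_graded_algebra G \<longleftrightarrow> Z2_decomp G \<and> 1 \<in> G False \<and>
     (\<forall>p q. \<forall>x\<in>G p. \<forall>y\<in>G q. x * y \<in> G (p \<noteq> q))"

definition left_module :: "('a::ring_1 \<Rightarrow> 'm::ab_group_add \<Rightarrow> 'm) \<Rightarrow> bool" where
  "left_module l \<longleftrightarrow> (\<forall>a x y. l a (x + y) = l a x + l a y) \<and> (\<forall>a b x. l (a + b) x = l a x + l b x)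
     \<and> (\<forall>a b x. l (a * b) x = l a (l b x)) \<and> (\<forall>x. l 1 x = x)"

definition right_module :: "('m::ab_group_add \<Rightarrow> 'a::ring_1 \<Rightarrow> 'm) \<Rightarrow> bool" where
  "right_module r \<longleftrightarrow> (\<forall>a x y. r (x + y) a = r x a + r y a) \<and> (\<forall>a b x. r x (a + b) = r x a + r x b)
     \<and> (\<forall>a b x. r x (a * b) = r (r x a) b) \<and> (\<forall>x. r x 1 = x)"

definition bimodule :: "('a::ring_1 \<Rightarrow> 'm::ab_group_add \<Rightarrow> 'm) \<Rightarrow> ('m \<Rightarrow> 'a \<Rightarrow> 'm) \<Rightarrow> bool" where
  "bimodule l r \<longleftrightarrow> left_module l \<and> right_module r \<and> (\<forall>a x b. r (l a x) b = l a (r x b))"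

definition graded_bimodule :: "(bool \<Rightarrow> 'a::ring_1 set) \<Rightarrow> ('a \<Rightarrow> 'm::ab_group_add \<Rightarrow> 'm)
    \<Rightarrow> ('m \<Rightarrow> 'a \<Rightarrow> 'm) \<Rightarrow> (bool \<Rightarrow> 'm set) \<Rightarrow> bool" where
  "graded_bimodule GA l r G \<longleftrightarrow> bimodule l r \<and> Z2_decomp G \<and>
     (\<forall>p q. \<forall>a\<in>GA p. \<forall>x\<in>G q. l a x \<in> G (p \<noteq> q) \<and> r x a \<in> G (p \<noteq> q))"

text \<open>Graded differential calculus, truncated at degree 2:
  Omega^0 = A, Omega^1, Omega^2, d : A -> Omega^1, d : Omega^1 -> Omega^2,
  product wedge : Omega^1 x Omega^1 -> Omega^2; the products of A with
  Omega^1, Omega^2 are the bimodule actions.\<close>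
definition graded_diff_calculus ::
  "(bool \<Rightarrow> 'a::ring_1 set) \<Rightarrow>
   ('a \<Rightarrow> 'o1::ab_group_add \<Rightarrow> 'o1) \<Rightarrow> ('o1 \<Rightarrow> 'a \<Rightarrow> 'o1) \<Rightarrow> (bool \<Rightarrow> 'o1 set) \<Rightarrow>
   ('a \<Rightarrow> 'o2::ab_group_add \<Rightarrow> 'o2) \<Rightarrow> ('o2 \<Rightarrow> 'a \<Rightarrow> 'o2) \<Rightarrow> (bool \<Rightarrow> 'o2 set) \<Rightarrow>
   ('a \<Rightarrow> 'o1) \<Rightarrow> ('o1 \<Rightarrow> 'o2) \<Rightarrow> ('o1 \<Rightarrow> 'o1 \<Rightarrow> 'o2) \<Rightarrow> bool" where
  "graded_diff_calculus GA l1 r1 G1 l2 r2 G2 d0 d1 wedge \<longleftrightarrow>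
     Z2_graded_algebra GA \<and> graded_bimodule GA l1 r1 G1 \<and> graded_bimodule GA l2 r2 G2 \<and>
     \<comment> \<open>wedge product: biadditive, associative with the module actions, parity additive\<close>
     (\<forall>x x' y. wedge (x + x') y = wedge x y + wedge x' y) \<and>
     (\<forall>x y y'. wedge x (y + y') = wedge x y + wedge x y') \<and>
     (\<forall>a x y. wedge (l1 a x) y = l2 a (wedge x y)) \<and>
     (\<forall>a x y. wedge (r1 x a) y = wedge x (l1 a y)) \<and>
     (\<forall>a x y. wedge x (r1 y a) = r2 (wedge x y) a) \<and>
     (\<forall>p q. \<forall>x\<in>G1 p. \<forall>y\<in>G1 q. wedge x y \<in> G2 (p \<noteq> q)) \<and>
     \<comment> \<open>differential: additive, changes parity, squares to zero, graded Leibniz\<close>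
     addhom d0 \<and> addhom d1 \<and>
     (\<forall>p. \<forall>f\<in>GA p. d0 f \<in> G1 (\<not> p)) \<and> (\<forall>p. \<forall>x\<in>G1 p. d1 x \<in> G2 (\<not> p)) \<and>
     (\<forall>f. d1 (d0 f) = 0) \<and>
     (\<forall>p. \<forall>f\<in>GA p. \<forall>g. d0 (f * g) = r1 (d0 f) g + psign p (l1 f (d0 g))) \<and>
     (\<forall>p. \<forall>f\<in>GA p. \<forall>x. d1 (l1 f x) = wedge (d0 f) x + psign p (l2 f (d1 x))) \<and>
     (\<forall>p. \<forall>x\<in>G1 p. \<forall>f. d1 (r1 x f) = r2 (d1 x) f + psign p (wedge x (d0 f)))"

text \<open>Tensor product over A of a right A-module (M, r) and a left A-module (N, l),
  characterised as the quotient of the free abelian group on M x N by the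
  biadditivity and balancing relations: t is biadditive and balanced, its image
  generates, and a formal integer combination maps to 0 iff it lies in the
  relation subgroup.\<close>

definition zsc :: "int \<Rightarrow> 'm::ab_group_add \<Rightarrow> 'm" where
  "zsc k x = (if k \<ge> 0 then (\<Sum>i<nat k. x) else - (\<Sum>i<nat (- k). x))"

definition delta :: "'p \<Rightarrow> 'p \<Rightarrow> int" where
  "delta q = (\<lambda>p. if p = q then 1 else 0)"

inductive tensor_rel :: "('m::ab_group_add \<Rightarrow> 'a::ring_1 \<Rightarrow> 'm) \<Rightarrow> ('a \<Rightarrow> 'n::ab_group_add \<Rightarrow> 'n)
    \<Rightarrow> ('m \<times> 'n \<Rightarrow> int) \<Rightarrow> bool" for r l where
  zero: "tensor_rel r l (\<lambda>_. 0)"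
| add: "tensor_rel r l c \<Longrightarrow> tensor_rel r l c' \<Longrightarrow> tensor_rel r l (\<lambda>p. c p + c' p)"
| neg: "tensor_rel r l c \<Longrightarrow> tensor_rel r l (\<lambda>p. - c p)"
| lin1: "tensor_rel r l (\<lambda>p. delta (x + x', y) p - delta (x, y) p - delta (x', y) p)"
| lin2: "tensor_rel r l (\<lambda>p. delta (x, y + y') p - delta (x, y) p - delta (x, y') p)"
| bal: "tensor_rel r l (\<lambda>p. delta (r x a, y) p - delta (x, l a y) p)"

definition tensor_product :: "('m::ab_group_add \<Rightarrow> 'a::ring_1 \<Rightarrow> 'm) \<Rightarrow> ('a \<Rightarrow> 'n::ab_group_add \<Rightarrow> 'n)
    \<Rightarrow> ('m \<Rightarrow> 'n \<Rightarrow> 't::ab_group_add) \<Rightarrow> bool" where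
  "tensor_product r l t \<longleftrightarrow>
     (\<forall>x x' y. t (x + x') y = t x y + t x' y) \<and>
     (\<forall>x y y'. t x (y + y') = t x y + t x y') \<and>
     (\<forall>x a y. t (r x a) y = t x (l a y)) \<and>
     (\<forall>z. \<exists>xs. z = sum_list (map (\<lambda>(x, y). t x y) xs)) \<and>
     (\<forall>c. finite {p. c p \<noteq> 0} \<longrightarrow>
        (\<Sum>p | c p \<noteq> 0. zsc (c p) (t (fst p) (snd p))) = 0 \<longrightarrow> tensor_rel r l c)"

definition tensor_grading :: "('m \<Rightarrow> 'n \<Rightarrow> 't::ab_group_add) \<Rightarrow> (bool \<Rightarrow> 'm set) \<Rightarrow> (bool \<Rightarrow> 'n set)
    \<Rightarrow> bool \<Rightarrow> 't set" where
  "tensor_grading t G H p = {z. \<exists>xs. z = sum_list (map (\<lambda>(x, y). t x y) xs) \<and>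
      (\<forall>(x, y)\<in>set xs. \<exists>q s. x \<in> G q \<and> y \<in> H s \<and> (q \<noteq> s) = p)}"

end

theory Submission
  imports Defs
begin

lemma addhom_0: "addhom f \<Longrightarrow> f 0 = 0"
  unfolding addhom_def by (metis add_cancel_left_right)

lemma addhom_neg: "addhom f \<Longrightarrow> f (- x) = - f x"
proof -
  assume a: "addhom f"
  have "f (- x) + f x = f (- x + x)" using a unfolding addhom_def by (metis (no_types))
  also have "\<dots> = 0" using addhom_0[OF a] by simp
  finally show ?thesis by (simp add: eq_neg_iff_add_eq_0)
qed

lemma addhom_comp: "addhom f \<Longrightarrow> addhom g \<Longrightarrow> addhom (\<lambda>x. f (g x))"
  unfolding addhom_def by simp

lemma addhom_eq_gen:
  assumes "addhom F" "addhom G" "\<forall>x y. F (t x y) = G (t x y)"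
  shows "F (sum_list (map (\<lambda>(x, y). t x y) xs)) = G (sum_list (map (\<lambda>(x, y). t x y) xs))"
proof (induction xs)
  case Nil then show ?case using addhom_0[OF assms(1)] addhom_0[OF assms(2)] by simp
next
  case (Cons a xs)
  then show ?case using assms unfolding addhom_def by (cases a) auto
qed

lemma addhom_eq_tp:
  assumes "tensor_product r l t" "addhom F" "addhom G" "\<forall>x y. F (t x y) = G (t x y)"
  shows "F z = G z"
proof -
  from assms(1) obtain xs where "z = sum_list (map (\<lambda>(x, y). t x y) xs)"
    unfolding tensor_product_def by blast
  then show ?thesis using addhom_eq_gen[OF assms(2-4)] by simp
qed


theorem mainTheorem2:
  fixes GA :: "bool \<Rightarrow> 'a::ring_1 set"
    and l1 :: "'a \<Rightarrow> 'o1::ab_group_add \<Rightarrow> 'o1" and r1 :: "'o1 \<Rightarrow> 'a \<Rightarrow> 'o1"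
    and G1 :: "bool \<Rightarrow> 'o1 set"
    and l2 :: "'a \<Rightarrow> 'o2::ab_group_add \<Rightarrow> 'o2" and r2 :: "'o2 \<Rightarrow> 'a \<Rightarrow> 'o2"
    and G2 :: "bool \<Rightarrow> 'o2 set"
    and d0 :: "'a \<Rightarrow> 'o1" and d1 :: "'o1 \<Rightarrow> 'o2" and wedge :: "'o1 \<Rightarrow> 'o1 \<Rightarrow> 'o2"
    and tt :: "'o1 \<Rightarrow> 'o1 \<Rightarrow> 't2::ab_group_add"
    and lT2 :: "'a \<Rightarrow> 't2 \<Rightarrow> 't2" and rT2 :: "'t2 \<Rightarrow> 'a \<Rightarrow> 't2"
    and t12 :: "'t2 \<Rightarrow> 'o1 \<Rightarrow> 't3::ab_group_add" and t1r :: "'o1 \<Rightarrow> 't2 \<Rightarrow> 't3"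
    and lT3 :: "'a \<Rightarrow> 't3 \<Rightarrow> 't3"
    and tw :: "'o2 \<Rightarrow> 'o1 \<Rightarrow> 'w::ab_group_add" and lW :: "'a \<Rightarrow> 'w \<Rightarrow> 'w"
    and pi :: "'t2 \<Rightarrow> 'o2" and pi12 :: "'t3 \<Rightarrow> 'w"
    and sigma :: "'t2 \<Rightarrow> 't2" and sigma12 :: "'t3 \<Rightarrow> 't3"
    and D1 :: "'o1 \<Rightarrow> 't2" and D2 :: "'t2 \<Rightarrow> 't3"
  assumes calc: "graded_diff_calculus GA l1 r1 G1 l2 r2 G2 d0 d1 wedge"
    \<comment> \<open>Omega^1 (x)_A Omega^1 with its bimodule structure\<close>
    and T2: "tensor_product r1 l1 tt"
    and T2_bimod: "bimodule lT2 rT2"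
    and T2_l: "\<forall>a x y. lT2 a (tt x y) = tt (l1 a x) y"
    and T2_r: "\<forall>a x y. rT2 (tt x y) a = tt x (r1 y a)"
    \<comment> \<open>(x)^3 Omega^1, as (Omega^1 (x) Omega^1) (x) Omega^1 = Omega^1 (x) (Omega^1 (x) Omega^1)\<close>
    and T3: "tensor_product rT2 l1 t12"
    and T3': "tensor_product r1 lT2 t1r"
    and T3_assoc: "\<forall>x y z. t1r x (tt y z) = t12 (tt x y) z"
    and T3_lmod: "left_module lT3"
    and T3_l: "\<forall>a z y. lT3 a (t12 z y) = t12 (lT2 a z) y"
    \<comment> \<open>Omega^2 (x)_A Omega^1 with its left module structure\<close>
    and W: "tensor_product r2 l1 tw"
    and W_lmod: "left_module lW"
    and W_l: "\<forall>a w y. lW a (tw w y) = tw (l2 a w) y"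
    \<comment> \<open>pi and pi12 = pi (x) 1\<close>
    and pi_add: "addhom pi" and pi_def: "\<forall>x y. pi (tt x y) = wedge x y"
    and pi12_add: "addhom pi12" and pi12_def: "\<forall>z y. pi12 (t12 z y) = tw (pi z) y"
    \<comment> \<open>sigma: left A-linear, pi o (sigma - 1) = 0; sigma12 = sigma (x) 1\<close>
    and sigma_add: "addhom sigma" and sigma_left: "\<forall>a z. sigma (lT2 a z) = lT2 a (sigma z)"
    and pi_sigma: "\<forall>z. pi (sigma z) = pi z"
    and sigma12_add: "addhom sigma12"
    and sigma12_def: "\<forall>z y. sigma12 (t12 z y) = t12 (sigma z) y"
    \<comment> \<open>covariant derivative D on Omega^1 and on (x)^2 Omega^1\<close>
    and D1_add: "addhom D1" and D2_add: "addhom D2"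
    and D1_par: "\<forall>p. \<forall>x\<in>G1 p. D1 x \<in> tensor_grading tt G1 G1 (\<not> p)"
    and D2_par: "\<forall>p. \<forall>z\<in>tensor_grading tt G1 G1 p.
                   D2 z \<in> tensor_grading t12 (tensor_grading tt G1 G1) G1 (\<not> p)"
    and D1_left: "\<forall>p. \<forall>f\<in>GA p. \<forall>x. D1 (l1 f x) = tt (d0 f) x + psign p (lT2 f (D1 x))"
    and D2_left: "\<forall>p. \<forall>f\<in>GA p. \<forall>z. D2 (lT2 f z) = t1r (d0 f) z + psign p (lT3 f (D2 z))"
    and D1_right: "\<forall>p q. \<forall>f\<in>GA p. \<forall>x\<in>G1 q.
                     D1 (r1 x f) = psign q (sigma (tt x (d0 f))) + rT2 (D1 x) f"
    and D2_tensor: "\<forall>q. \<forall>x\<in>G1 q. \<forall>x'.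
                     D2 (tt x x') = t12 (D1 x) x' + psign q (sigma12 (t1r x (D1 x')))"
    \<comment> \<open>torsion Theta = d - pi o D vanishes on Omega^1\<close>
    and torsionless: "\<forall>x. d1 x - pi (D1 x) = 0"
  shows "\<forall>f x. pi12 (D2 (D1 (l1 f x))) = lW f (pi12 (D2 (D1 x)))"
proof -
  have c: "Z2_graded_algebra GA" "graded_bimodule GA l1 r1 G1" "graded_bimodule GA l2 r2 G2"
    "\<forall>a x y. wedge (l1 a x) y = l2 a (wedge x y)"
    "\<forall>p. \<forall>f\<in>GA p. d0 f \<in> G1 (\<not> p)" "\<forall>f. d1 (d0 f) = 0"
    using calc unfolding graded_diff_calculus_def by auto
  have l1m: "left_module l1" and l2m: "left_module l2"
    using c(2,3) unfolding graded_bimodule_def bimodule_def by auto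
  have lT2m: "left_module lT2" using T2_bimod unfolding bimodule_def by auto
  have GAd: "Z2_decomp GA" using c(1) unfolding Z2_graded_algebra_def by auto
  have tt1: "\<forall>x x' y. tt (x + x') y = tt x y + tt x' y" using T2 unfolding tensor_product_def by auto
  have t12_1: "\<forall>x x' y. t12 (x + x') y = t12 x y + t12 x' y" using T3 unfolding tensor_product_def by auto
  have t1r2: "\<forall>x y y'. t1r x (y + y') = t1r x y + t1r x y'" using T3' unfolding tensor_product_def by auto
  have tw1: "\<forall>x x' y. tw (x + x') y = tw x y + tw x' y" using W unfolding tensor_product_def by auto
  have tw0: "\<And>y. tw 0 y = 0" using tw1[rule_format, of 0 0] by simp
  have A: "\<And>f z. pi (lT2 f z) = l2 f (pi z)"
  proof -
    fix f z
    show "pi (lT2 f z) = l2 f (pi z)"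
    proof (rule addhom_eq_tp[OF T2, where F="\<lambda>z. pi (lT2 f z)" and G="\<lambda>z. l2 f (pi z)"])
      show "addhom (\<lambda>z. pi (lT2 f z))" using pi_add lT2m unfolding addhom_def left_module_def by simp
      show "addhom (\<lambda>z. l2 f (pi z))" using pi_add l2m unfolding addhom_def left_module_def by simp
      show "\<forall>x y. pi (lT2 f (tt x y)) = l2 f (pi (tt x y))" using T2_l pi_def c(4) by simp
    qed
  qed
  have B: "\<And>f w. pi12 (lT3 f w) = lW f (pi12 w)"
  proof -
    fix f w
    show "pi12 (lT3 f w) = lW f (pi12 w)"
    proof (rule addhom_eq_tp[OF T3, where F="\<lambda>z. pi12 (lT3 f z)" and G="\<lambda>z. lW f (pi12 z)"])
      show "addhom (\<lambda>z. pi12 (lT3 f z))" using pi12_add T3_lmod unfolding addhom_def left_module_def by simp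
      show "addhom (\<lambda>z. lW f (pi12 z))" using pi12_add W_lmod unfolding addhom_def left_module_def by simp
      show "\<forall>x y. pi12 (lT3 f (t12 x y)) = lW f (pi12 (t12 x y))" using T3_l pi12_def A W_l by simp
    qed
  qed
  have C: "\<And>a z. pi12 (sigma12 (t1r a z)) = pi12 (t1r a z)"
  proof -
    fix a z
    show "pi12 (sigma12 (t1r a z)) = pi12 (t1r a z)"
    proof (rule addhom_eq_tp[OF T2, where F="\<lambda>z. pi12 (sigma12 (t1r a z))" and G="\<lambda>z. pi12 (t1r a z)"])
      show "addhom (\<lambda>z. pi12 (sigma12 (t1r a z)))" using pi12_add sigma12_add t1r2 unfolding addhom_def by simp
      show "addhom (\<lambda>z. pi12 (t1r a z))" using pi12_add t1r2 unfolding addhom_def by simp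
      show "\<forall>x y. pi12 (sigma12 (t1r a (tt x y))) = pi12 (t1r a (tt x y))"
        using T3_assoc sigma12_def pi12_def pi_sigma by simp
    qed
  qed
  have hom: "pi12 (D2 (D1 (l1 f x))) = lW f (pi12 (D2 (D1 x)))" if fp: "f \<in> GA p" for f x p
  proof -
    have df: "d0 f \<in> G1 (\<not> p)" using c(5) fp by blast
    have e1: "D1 (l1 f x) = tt (d0 f) x + psign p (lT2 f (D1 x))" using D1_left fp by blast
    have e2: "D2 (tt (d0 f) x) = t12 (D1 (d0 f)) x + psign (\<not> p) (sigma12 (t1r (d0 f) (D1 x)))"
      using D2_tensor df by blast
    have e3: "D2 (lT2 f (D1 x)) = t1r (d0 f) (D1 x) + psign p (lT3 f (D2 (D1 x)))"
      using D2_left fp by blast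
    have D2a: "D2 (u + v) = D2 u + D2 v" for u v using D2_add unfolding addhom_def by blast
    have pa: "pi12 (u + v) = pi12 u + pi12 v" for u v using pi12_add unfolding addhom_def by blast
    have D2neg: "D2 (- z) = - D2 z" for z using addhom_neg[OF D2_add] .
    have pneg: "pi12 (- z) = - pi12 z" for z using addhom_neg[OF pi12_add] .
    have D2s: "D2 (psign q z) = psign q (D2 z)" for q z using D2neg unfolding psign_def by simp
    have ps: "pi12 (psign q z) = psign q (pi12 z)" for q z using pneg unfolding psign_def by simp
    have p0: "pi12 (t12 (D1 (d0 f)) x) = 0"
    proof -
      have "pi (D1 (d0 f)) = 0" using torsionless[rule_format, of "d0 f"] c(6) by simp
      then show ?thesis using pi12_def tw0 by simp
    qed
    define u where "u = pi12 (t1r (d0 f) (D1 x))"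
    have "pi12 (D2 (D1 (l1 f x))) = pi12 (D2 (tt (d0 f) x)) + psign p (pi12 (D2 (lT2 f (D1 x))))"
      unfolding e1 D2a pa D2s ps ..
    also have "\<dots> = psign (\<not> p) u + psign p (u + psign p (pi12 (lT3 f (D2 (D1 x)))))"
      unfolding e2 e3 pa ps p0 C u_def by simp
    also have "\<dots> = pi12 (lT3 f (D2 (D1 x)))" unfolding psign_def by (cases p) auto
    also have "\<dots> = lW f (pi12 (D2 (D1 x)))" using B .
    finally show ?thesis .
  qed
  show ?thesis
  proof (intro allI)
    fix f x
    obtain f0 f1 where f0: "f0 \<in> GA False" and f1: "f1 \<in> GA True" and fe: "f = f0 + f1"
      using GAd unfolding Z2_decomp_def by blast
    have "pi12 (D2 (D1 (l1 f x))) = pi12 (D2 (D1 (l1 f0 x))) + pi12 (D2 (D1 (l1 f1 x)))"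
      using fe l1m D1_add D2_add pi12_add unfolding left_module_def addhom_def by simp
    also have "\<dots> = lW f0 (pi12 (D2 (D1 x))) + lW f1 (pi12 (D2 (D1 x)))"
      using hom f0 f1 by simp
    also have "\<dots> = lW f (pi12 (D2 (D1 x)))" using fe W_lmod unfolding left_module_def by simp
    finally show "pi12 (D2 (D1 (l1 f x))) = lW f (pi12 (D2 (D1 x)))" .
  qed
qed

end
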